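(* Let $q$ be a prime and $k\in\mathbb{N}$. There is a positive constant $m'_{q,k}$ depending only on $q$ and $k$ such that for every $N\in\mathbb{N}$, the number of $k$-element subsets of $[N]^{\times}=\{\pm p_1^{e_1}p_2^{e_2}\cdots p_N^{e_N}: 0\le e_1,\ldots,e_N\le N\}$ that contain at least one perfect $q^{th}$ power is at most $m'_{q,k}\frac{N^{Nk}}{q^N}$.
   Context: $p_1<p_2<\cdots$ denote the primes in increasing order. A perfect $q^{th}$ power is an integer of the form $m^q$ with $m\in\mathbb{Z}$. *)

theory Defs
  imports Complex_Main "HOL-Computational_Algebra.Primes" "HOL-Library.Infinite_Set"
begin

text \<open>The i-th prime, 0-indexed: nth_prime 0 = 2, i.e. p_{i+1} = nth_prime i.\<close>
definition nth_prime :: "nat \<Rightarrow> nat" where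
  "nth_prime i = enumerate {p::nat. prime p} i"

definition mult_box :: "nat \<Rightarrow> int set" where
  "mult_box N = {s * int (\<Prod>i<N. nth_prime i ^ e i) | s e.
      s \<in> {1, -1} \<and> (\<forall>i<N. e i \<le> N)}"

definition perfect_power :: "nat \<Rightarrow> int \<Rightarrow> bool" where
  "perfect_power q x \<longleftrightarrow> (\<exists>m::int. x = m ^ q)"

end

theory Submission
  imports Defs "HOL-Library.FuncSet"
begin

lemma np_prime: "prime (nth_prime i)"
  unfolding nth_prime_def using enumerate_in_set[OF primes_infinite] by auto

lemma np_inj: "inj nth_prime"
  unfolding nth_prime_def using inj_enumerate[OF primes_infinite] by simp

lemma np_pos: "nth_prime i > 0"
  using np_prime[of i] prime_gt_0_nat by blast

lemma prod_ne0: "(\<Prod>j<n. nth_prime j ^ e j) \<noteq> 0"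
  using np_pos by (simp add: prod_zero_iff)

lemma mult_prod:
  "multiplicity (nth_prime i) (\<Prod>j<n. nth_prime j ^ e j) = (if i < n then e i else 0)"
proof (induction n)
  case 0
  then show ?case using np_prime[of i] by (simp add: multiplicity_unit_right)
next
  case (Suc n)
  have pn: "nth_prime n ^ e n \<noteq> 0" using np_pos[of n] by simp
  have "multiplicity (nth_prime i) (\<Prod>j<Suc n. nth_prime j ^ e j)
     = multiplicity (nth_prime i) (\<Prod>j<n. nth_prime j ^ e j) + multiplicity (nth_prime i) (nth_prime n ^ e n)"
    by (simp add: prime_elem_multiplicity_mult_distrib[OF prime_imp_prime_elem[OF np_prime] prod_ne0 pn])
  also have "multiplicity (nth_prime i) (nth_prime n ^ e n) = (if i = n then e n else 0)"
  proof (cases "i = n")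
    case True then show ?thesis using np_prime[of n] by simp
  next
    case False
    then have "nth_prime i \<noteq> nth_prime n" using np_inj by (meson injD)
    then show ?thesis using False np_prime[of i] np_prime[of n] np_pos[of n]
      by (simp add: prime_elem_multiplicity_power_distrib prime_multiplicity_other)
  qed
  finally show ?case using Suc by auto
qed


definition boxf :: "nat \<Rightarrow> int \<times> (nat \<Rightarrow> nat) \<Rightarrow> int" where
  "boxf N = (\<lambda>(s,e). s * int (\<Prod>i<N. nth_prime i ^ e i))"

lemma box_sub: "mult_box N \<subseteq> boxf N ` ({1,-1} \<times> PiE {..<N} (\<lambda>_. {0..N}))"
proof
  fix x assume "x \<in> mult_box N"
  then obtain s e where x: "x = s * int (\<Prod>i<N. nth_prime i ^ e i)" "s \<in> {1,-1}" "\<forall>i<N. e i \<le> N"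
    unfolding mult_box_def by blast
  have "(\<Prod>i<N. nth_prime i ^ e i) = (\<Prod>i<N. nth_prime i ^ restrict e {..<N} i)"
    by (rule prod.cong) (auto simp: restrict_apply)
  moreover have "restrict e {..<N} \<in> PiE {..<N} (\<lambda>_. {0..N})" using x(3) by auto
  ultimately show "x \<in> boxf N ` ({1,-1} \<times> PiE {..<N} (\<lambda>_. {0..N}))"
    using x unfolding boxf_def by (intro image_eqI[of _ _ "(s, restrict e {..<N})"]) auto
qed

lemma box_fin: "finite (mult_box N)"
  by (rule finite_subset[OF box_sub]) (auto intro!: finite_PiE)

lemma box_card: "card (mult_box N) \<le> 2 * (N+1)^N"
proof -
  have "card (mult_box N) \<le> card ({1,-1::int} \<times> PiE {..<N} (\<lambda>_. {0..N}))"
    by (rule order_trans[OF card_mono[OF _ box_sub] card_image_le]) (auto intro!: finite_PiE)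
  also have "\<dots> = 2 * (N+1)^N" by (simp add: card_cartesian_product card_PiE)
  finally show ?thesis .
qed

definition mulq :: "nat \<Rightarrow> nat \<Rightarrow> nat set" where
  "mulq q N = {j. j \<le> N \<and> q dvd j}"

lemma mulq_fin: "finite (mulq q N)"
  unfolding mulq_def by (rule finite_subset[of _ "{..N}"]) auto

lemma mulq_card: "q > 0 \<Longrightarrow> card (mulq q N) \<le> N div q + 1"
proof -
  assume q: "q > 0"
  have "mulq q N \<subseteq> (\<lambda>t. t*q) ` {0..N div q}"
  proof
    fix j assume "j \<in> mulq q N"
    then have "j \<le> N" "q dvd j" unfolding mulq_def by auto
    then obtain t where "j = t*q" "t*q \<le> N" by (metis dvd_def mult.commute)
    moreover have "t \<le> N div q" using q calculation(2) by (simp add: div_le_mono less_eq_div_iff_mult_less_eq)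
    ultimately show "j \<in> (\<lambda>t. t*q) ` {0..N div q}" by auto
  qed
  then have "card (mulq q N) \<le> card ((\<lambda>t. t*q) ` {0..N div q})" by (intro card_mono) auto
  also have "\<dots> \<le> N div q + 1" using card_image_le[of "{0..N div q}" "\<lambda>t. t*q"] by simp
  finally show ?thesis .
qed

lemma pp_dvd:
  assumes "prime q" "x = s * int (\<Prod>i<N. nth_prime i ^ e i)" "s \<in> {1,-1}" "perfect_power q x" "i < N"
  shows "q dvd e i"
proof -
  obtain m where m: "x = m ^ q" using assms(4) unfolding perfect_power_def by blast
  define P where "P = (\<Prod>i<N. nth_prime i ^ e i)"
  have xP: "x = s * int P" using assms(2) P_def by simp
  have "\<bar>x\<bar> = int P" using xP assms(3) by auto
  also have "\<bar>x\<bar> = \<bar>m\<bar> ^ q" using m by (simp add: power_abs)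
  finally have "int P = int (nat \<bar>m\<bar>) ^ q" by simp
  then have PP: "P = nat \<bar>m\<bar> ^ q" using of_nat_eq_iff of_nat_power by metis
  have "P \<noteq> 0" unfolding P_def by (rule prod_ne0)
  then have "nat \<bar>m\<bar> \<noteq> 0" using PP assms(1) by (auto simp: prime_gt_0_nat)
  have "e i = multiplicity (nth_prime i) P" unfolding P_def using mult_prod assms(5) by simp
  also have "\<dots> = q * multiplicity (nth_prime i) (nat \<bar>m\<bar>)" unfolding PP
    using prime_elem_multiplicity_power_distrib[OF prime_imp_prime_elem[OF np_prime] \<open>nat \<bar>m\<bar> \<noteq> 0\<close>] .
  finally show ?thesis by simp
qed

lemma pp_sub:
  assumes "prime q"
  shows "{x \<in> mult_box N. perfect_power q x} \<subseteq> boxf N ` ({1,-1} \<times> PiE {..<N} (\<lambda>_. mulq q N))"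
proof
  fix x assume "x \<in> {x \<in> mult_box N. perfect_power q x}"
  then obtain s e where x: "x = s * int (\<Prod>i<N. nth_prime i ^ e i)" "s \<in> {1,-1}" "\<forall>i<N. e i \<le> N"
     "perfect_power q x"
    unfolding mult_box_def by blast
  have "(\<Prod>i<N. nth_prime i ^ e i) = (\<Prod>i<N. nth_prime i ^ restrict e {..<N} i)"
    by (rule prod.cong) (auto simp: restrict_apply)
  moreover have "restrict e {..<N} \<in> PiE {..<N} (\<lambda>_. mulq q N)"
    using x(3) pp_dvd[OF assms x(1,2,4)] unfolding mulq_def by auto
  ultimately show "x \<in> boxf N ` ({1,-1} \<times> PiE {..<N} (\<lambda>_. mulq q N))"
    using x unfolding boxf_def by (intro image_eqI[of _ _ "(s, restrict e {..<N})"]) auto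
qed

lemma pp_card:
  assumes "prime q"
  shows "card {x \<in> mult_box N. perfect_power q x} \<le> 2 * (N div q + 1)^N"
proof -
  have "card {x \<in> mult_box N. perfect_power q x} \<le> card ({1,-1::int} \<times> PiE {..<N} (\<lambda>_. mulq q N))"
    by (rule order_trans[OF card_mono[OF _ pp_sub[OF assms]] card_image_le]) (auto intro!: finite_PiE mulq_fin)
  also have "\<dots> = 2 * card (mulq q N)^N" by (simp add: card_cartesian_product card_PiE)
  also have "\<dots> \<le> 2 * (N div q + 1)^N"
    using mulq_card[of q N] assms prime_gt_0_nat by (simp add: power_mono)
  finally show ?thesis .
qed


lemma subsets_count:
  assumes "finite B" "k \<ge> 1"
  shows "card {A. A \<subseteq> B \<and> card A = k \<and> (\<exists>x\<in>A. Q x)} \<le> card {x\<in>B. Q x} * card B ^ (k-1)"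
proof -
  define S where "S = {A'. A' \<subseteq> B \<and> card A' = k-1}"
  define U where "U = (\<Union>x\<in>{x\<in>B. Q x}. insert x ` S)"
  have sub: "{A. A \<subseteq> B \<and> card A = k \<and> (\<exists>x\<in>A. Q x)} \<subseteq> U"
  proof
    fix A assume "A \<in> {A. A \<subseteq> B \<and> card A = k \<and> (\<exists>x\<in>A. Q x)}"
    then obtain x where A: "A \<subseteq> B" "card A = k" "x \<in> A" "Q x" by blast
    have fA: "finite A" using A(1) assms(1) finite_subset by blast
    have "A - {x} \<subseteq> B" using A(1) by blast
    moreover have "card (A - {x}) = k - 1" using A(2,3) fA by simp
    ultimately have S1: "A - {x} \<in> S" unfolding S_def by blast
    have A2: "A = insert x (A - {x})" using A(3) by blast
    have "A \<in> insert x ` S" using S1 A2 by (rule rev_image_eqI)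
    moreover have "x \<in> {x\<in>B. Q x}" using A by blast
    ultimately show "A \<in> U" unfolding U_def by (rule UN_I[rotated])
  qed
  have fS: "finite S" unfolding S_def using assms(1) by (metis (no_types, lifting) Collect_mono_iff finite_Collect_subsets rev_finite_subset)
  have fB: "finite {x\<in>B. Q x}" using assms(1) by simp
  have fU: "finite U" unfolding U_def using fS fB by simp
  have "card {A. A \<subseteq> B \<and> card A = k \<and> (\<exists>x\<in>A. Q x)} \<le> card U"
    by (rule card_mono[OF fU sub])
  also have "\<dots> \<le> (\<Sum>x\<in>{x\<in>B. Q x}. card (insert x ` S))"
    unfolding U_def by (rule card_UN_le[OF fB])
  also have "\<dots> \<le> (\<Sum>x\<in>{x\<in>B. Q x}. card B ^ (k-1))"
  proof (rule sum_mono)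
    fix x
    have "card (insert x ` S) \<le> card S" by (rule card_image_le[OF fS])
    also have "\<dots> = card B choose (k-1)" unfolding S_def by (rule n_subsets[OF assms(1)])
    also have "\<dots> \<le> card B ^ (k-1)"
    proof (cases "k-1 \<le> card B")
      case True then show ?thesis by (rule binomial_le_pow)
    next
      case False then show ?thesis by (simp add: binomial_eq_0)
    qed
    finally show "card (insert x ` S) \<le> card B ^ (k-1)" .
  qed
  also have "\<dots> = card {x\<in>B. Q x} * card B ^ (k-1)" by simp
  finally show ?thesis .
qed

lemma exp_bound:
  fixes c :: real
  assumes "c > 0"
  shows "(real N / c + 1) ^ N \<le> exp c * (real N / c) ^ N"
proof (cases "N = 0")
  case True then show ?thesis using assms by simp
next
  case False
  then have Np: "real N > 0" by simp
  have "real N / c + 1 = (real N / c) * (1 + c / real N)" using Np assms by (simp add: field_simps)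
  then have e1: "(real N / c + 1) ^ N = (real N / c) ^ N * (1 + c / real N) ^ N" by (metis power_mult_distrib)
  have e2: "(1 + c / real N) ^ N \<le> exp (c / real N) ^ N"
  proof (rule power_mono)
    show "1 + c / real N \<le> exp (c / real N)" by (rule exp_ge_add_one_self)
    show "0 \<le> 1 + c / real N" using assms Np by simp
  qed
  have e3: "exp (c / real N) ^ N = exp c"
    using Np exp_of_nat_mult[of N "c / real N"] by simp
  have "(real N / c) ^ N * (1 + c / real N) ^ N \<le> (real N / c) ^ N * exp c"
    using e2 e3 assms Np by (intro mult_left_mono) auto
  then show ?thesis using e1 by (simp add: mult.commute)
qed


theorem lemma2:
  fixes q k :: nat
  assumes "prime q"
  shows "\<exists>C::real. C > 0 \<and> (\<forall>N::nat.
    real (card {A. A \<subseteq> mult_box N \<and> card A = k \<and> (\<exists>x\<in>A. perfect_power q x)})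
      \<le> C * real N ^ (N * k) / real q ^ N)"
proof (intro exI conjI allI)
  define C :: real where "C = 2 * exp (real q) * (2 * exp 1) ^ (k-1)"
  show "C > 0" unfolding C_def by simp
  fix N :: nat
  have qp: "real q > 0" using assms prime_gt_0_nat by simp
  let ?cnt = "card {A. A \<subseteq> mult_box N \<and> card A = k \<and> (\<exists>x\<in>A. perfect_power q x)}"
  have rhs0: "0 \<le> C * real N ^ (N * k) / real q ^ N" unfolding C_def using qp by simp
  show "real ?cnt \<le> C * real N ^ (N * k) / real q ^ N"
  proof (cases "k = 0")
    case True
    then have "{A. A \<subseteq> mult_box N \<and> card A = k \<and> (\<exists>x\<in>A. perfect_power q x)} = {}"
      using box_fin by (auto dest: finite_subset)
    then have "?cnt = 0" by (metis card.empty)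
    then show ?thesis using rhs0 by simp
  next
    case False
    then have k1: "k \<ge> 1" by simp
    have c1: "?cnt \<le> card {x \<in> mult_box N. perfect_power q x} * card (mult_box N) ^ (k-1)"
      by (rule subsets_count[OF box_fin k1])
    also have "\<dots> \<le> 2 * (N div q + 1)^N * (2 * (N+1)^N) ^ (k-1)"
      by (intro mult_mono power_mono pp_card[OF assms] box_card) auto
    finally have c2: "real ?cnt \<le> 2 * real (N div q + 1)^N * (2 * real (N+1)^N) ^ (k-1)"
      by (metis (mono_tags, lifting) of_nat_le_iff of_nat_mult of_nat_numeral of_nat_power)
    have a1: "real (N div q + 1) ^ N \<le> exp (real q) * (real N / real q) ^ N"
    proof -
      have "real (N div q + 1) \<le> real N / real q + 1" using of_nat_div_le_of_nat[of N q] by simp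
      then have "real (N div q + 1) ^ N \<le> (real N / real q + 1) ^ N" by (intro power_mono) auto
      also have "\<dots> \<le> exp (real q) * (real N / real q) ^ N" by (rule exp_bound[OF qp])
      finally show ?thesis .
    qed
    have a2: "real (N + 1) ^ N \<le> exp 1 * real N ^ N"
      using exp_bound[of 1 N] by (simp add: add.commute)
    have "2 * real (N div q + 1)^N * (2 * real (N+1)^N) ^ (k-1)
        \<le> 2 * (exp (real q) * (real N / real q) ^ N) * (2 * (exp 1 * real N ^ N)) ^ (k-1)"
      using a1 a2 by (intro mult_mono power_mono) auto
    also have "\<dots> = C * (real N ^ N * real N ^ (N * (k-1))) / real q ^ N"
      unfolding C_def by (simp add: power_mult_distrib power_divide field_simps power_mult[symmetric])
    also have "real N ^ N * real N ^ (N * (k-1)) = real N ^ (N * k)"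
      using k1 by (simp add: power_add[symmetric] algebra_simps)
    finally show ?thesis using c2 by linarith
  qed
qed

end
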